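(* Let $1\le k\le n-1$, $\gamma=k/n$, and let $g\colon\{0,1\}^m\to\{0,1\}^n$ be a $(d,r)$-local function. Then $$\|g(\mathcal{U}^m)-\mathcal{D}_k\|\ge 1-2\sqrt{2n}\cdot\exp\left\{-\frac{\mathsf{err}(\gamma,d)^2\cdot r}{2}\right\}.$$
   Context: $\mathcal{U}^m$ is uniform on $\{0,1\}^m$; $\mathcal{D}_k$ is the uniform distribution on strings in $\{0,1\}^n$ of Hamming weight $k$. A function $g$ is $d$-local if each output bit depends on at most $d$ input bits; $I_g(i)$ is the set of input coordinates on which output bit $i$ depends. Output bits $i_1,\dots,i_r$ are non-connected if $I_g(i_1),\dots,I_g(i_r)$ are pairwise disjoint; $g$ is $(d,r)$-local if it is $d$-local and has $r$ non-connected output bits. $\mathsf{err}(\gamma,t)$ is the minimum distance of $\gamma$ to an integer multiple of $2^{-t}$. $\|\cdot\|$ is total variation distance. *)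

theory Defs
  imports "HOL-Probability.Probability"
begin

definition bitstrings :: "nat \<Rightarrow> bool list set" where
  "bitstrings m = {xs. length xs = m}"

definition hweight :: "bool list \<Rightarrow> nat" where
  "hweight xs = length (filter id xs)"

definition unif_bits :: "nat \<Rightarrow> bool list pmf" where
  "unif_bits m = pmf_of_set (bitstrings m)"

definition D_weight :: "nat \<Rightarrow> nat \<Rightarrow> bool list pmf" where
  "D_weight n k = pmf_of_set {ys \<in> bitstrings n. hweight ys = k}"

definition tvd :: "'a pmf \<Rightarrow> 'a pmf \<Rightarrow> real" where
  "tvd p q = (SUP A. \<bar>measure_pmf.prob p A - measure_pmf.prob q A\<bar>)"

definition dep_set :: "(bool list \<Rightarrow> bool list) \<Rightarrow> nat \<Rightarrow> nat \<Rightarrow> nat set" where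
  "dep_set g m i = {j. j < m \<and> (\<exists>x \<in> bitstrings m. g x ! i \<noteq> g (x[j := \<not> x ! j]) ! i)}"

definition d_local :: "(bool list \<Rightarrow> bool list) \<Rightarrow> nat \<Rightarrow> nat \<Rightarrow> nat \<Rightarrow> bool" where
  "d_local g m n d \<longleftrightarrow> (\<forall>i<n. card (dep_set g m i) \<le> d)"

definition dr_local :: "(bool list \<Rightarrow> bool list) \<Rightarrow> nat \<Rightarrow> nat \<Rightarrow> nat \<Rightarrow> nat \<Rightarrow> bool" where
  "dr_local g m n d r \<longleftrightarrow> d_local g m n d \<and>
     (\<exists>S. S \<subseteq> {..<n} \<and> card S = r \<and>
        (\<forall>i\<in>S. \<forall>i'\<in>S. i \<noteq> i' \<longrightarrow> dep_set g m i \<inter> dep_set g m i' = {}))"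

definition err :: "real \<Rightarrow> nat \<Rightarrow> real" where
  "err \<gamma> t = (INF j::int. \<bar>\<gamma> - real_of_int j / 2 ^ t\<bar>)"

end

theory Submission
  imports Defs
begin

lemma map_Pi_restrict:
  assumes "finite M" "M' \<subseteq> M" "D \<subseteq> M'"
    and dep: "\<And>f f'. (\<forall>x\<in>D. f x = f' x) \<Longrightarrow> \<phi> f = \<phi> f'"
  shows "map_pmf \<phi> (Pi_pmf M' dflt p) = map_pmf \<phi> (Pi_pmf M dflt p)"
proof -
  have "Pi_pmf M' dflt p = map_pmf (\<lambda>f x. if x \<in> M' then f x else dflt) (Pi_pmf M dflt p)"
    using assms by (intro Pi_pmf_subset)
  hence "map_pmf \<phi> (Pi_pmf M' dflt p) = map_pmf (\<phi> \<circ> (\<lambda>f x. if x \<in> M' then f x else dflt)) (Pi_pmf M dflt p)"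
    by (simp add: pmf.map_comp)
  also have "\<dots> = map_pmf \<phi> (Pi_pmf M dflt p)"
    by (intro map_pmf_cong refl) (use assms(3) in \<open>auto intro!: dep\<close>)
  finally show ?thesis .
qed

lemma Pi_indep:
  fixes \<phi> :: "'i \<Rightarrow> ('a \<Rightarrow> 'b) \<Rightarrow> 'c"
  assumes "finite I" "finite M" "\<forall>i\<in>I. D i \<subseteq> M"
    "\<forall>i\<in>I. \<forall>j\<in>I. i \<noteq> j \<longrightarrow> D i \<inter> D j = {}"
    "\<forall>i\<in>I. \<forall>f f'. (\<forall>x\<in>D i. f x = f' x) \<longrightarrow> \<phi> i f = \<phi> i f'"
  shows "map_pmf (\<lambda>f i. if i \<in> I then \<phi> i f else c) (Pi_pmf M dflt p)
       = Pi_pmf I c (\<lambda>i. map_pmf (\<phi> i) (Pi_pmf M dflt p))"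
  using assms
proof (induction I arbitrary: M rule: finite_induct)
  case empty
  then show ?case by (simp add: map_pmf_const)
next
  case (insert i I M)
  let ?G = "\<lambda>f j. if j \<in> I then \<phi> j f else c"
  let ?mg = "\<lambda>(a, b) x. if x \<in> D i then a x else b x"
  have Di: "D i \<subseteq> M" using insert.prems by auto
  have fin: "finite (D i)" "finite (M - D i)" using Di insert.prems(1) finite_subset by auto
  have MM: "M = D i \<union> (M - D i)" using Di by auto
  have PM: "Pi_pmf M dflt p = map_pmf ?mg (pair_pmf (Pi_pmf (D i) dflt p) (Pi_pmf (M - D i) dflt p))"
    by (subst MM, rule Pi_pmf_union) (use fin in auto)
  have key: "(\<lambda>j. if j \<in> insert i I then \<phi> j (\<lambda>x. if x \<in> D i then a x else b x) else c) = (?G b)(i := \<phi> i a)" for a b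
  proof
    fix j
    show "(if j \<in> insert i I then \<phi> j (\<lambda>x. if x \<in> D i then a x else b x) else c) = ((?G b)(i := \<phi> i a)) j"
    proof (cases "j = i")
      case True
      have "\<phi> i (\<lambda>x. if x \<in> D i then a x else b x) = \<phi> i a"
        by (rule insert.prems(4)[rule_format]) auto
      then show ?thesis using True by simp
    next
      case ji: False
      show ?thesis
      proof (cases "j \<in> I")
        case True
        have disj: "D i \<inter> D j = {}" using insert.prems(3) True ji insert.hyps by blast
        have "\<phi> j (\<lambda>x. if x \<in> D i then a x else b x) = \<phi> j b"
          using disj True by (intro insert.prems(4)[rule_format]) auto
        then show ?thesis using True ji by simp
      next
        case False
        then show ?thesis using ji by simp
      qed
    qed
  qed
  have eq1: "(\<lambda>f j. if j \<in> insert i I then \<phi> j f else c) \<circ> ?mg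
        = (\<lambda>(y, f). f(i := y)) \<circ> (\<lambda>(a, b). (\<phi> i a, ?G b))"
    by (rule ext) (clarsimp simp only: o_def case_prod_beta fst_conv snd_conv key)
  have IH: "map_pmf ?G (Pi_pmf (M - D i) dflt p) = Pi_pmf I c (\<lambda>j. map_pmf (\<phi> j) (Pi_pmf (M - D i) dflt p))"
    using insert.prems by (intro insert.IH) (use insert.hyps in \<open>auto simp: fin\<close>)
  have IH2: "Pi_pmf I c (\<lambda>j. map_pmf (\<phi> j) (Pi_pmf (M - D i) dflt p)) = Pi_pmf I c (\<lambda>j. map_pmf (\<phi> j) (Pi_pmf M dflt p))"
  proof (intro Pi_pmf_cong refl)
    fix j assume j: "j \<in> I"
    have "j \<noteq> i" using j insert.hyps by auto
    hence "D j \<subseteq> M - D i" using insert.prems j by auto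
    then show "map_pmf (\<phi> j) (Pi_pmf (M - D i) dflt p) = map_pmf (\<phi> j) (Pi_pmf M dflt p)"
      using insert.prems j by (intro map_Pi_restrict) auto
  qed
  have Ii: "map_pmf (\<phi> i) (Pi_pmf (D i) dflt p) = map_pmf (\<phi> i) (Pi_pmf M dflt p)"
    using insert.prems Di by (intro map_Pi_restrict) auto
  have "map_pmf (\<lambda>f j. if j \<in> insert i I then \<phi> j f else c) (Pi_pmf M dflt p)
      = map_pmf ((\<lambda>(y, f). f(i := y)) \<circ> (\<lambda>(a, b). (\<phi> i a, ?G b))) (pair_pmf (Pi_pmf (D i) dflt p) (Pi_pmf (M - D i) dflt p))"
    unfolding PM pmf.map_comp eq1 ..
  also have "\<dots> = map_pmf (\<lambda>(y, f). f(i := y)) (pair_pmf (map_pmf (\<phi> i) (Pi_pmf (D i) dflt p)) (map_pmf ?G (Pi_pmf (M - D i) dflt p)))"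
    by (simp add: pmf.map_comp[symmetric] map_pair)
  also have "\<dots> = map_pmf (\<lambda>(y, f). f(i := y)) (pair_pmf (map_pmf (\<phi> i) (Pi_pmf M dflt p)) (Pi_pmf I c (\<lambda>j. map_pmf (\<phi> j) (Pi_pmf M dflt p))))"
    unfolding IH IH2 Ii ..
  also have "\<dots> = Pi_pmf (insert i I) c (\<lambda>j. map_pmf (\<phi> j) (Pi_pmf M dflt p))"
    by (rule Pi_pmf_insert[symmetric]) (use insert.hyps in auto)
  finally show ?case .
qed

lemma dep_agree:
  assumes "length x = m" "length y = m" "\<forall>j\<in>dep_set g m i. x ! j = y ! j"
  shows "g x ! i = g y ! i"
proof -
  have "\<forall>x. length x = m \<longrightarrow> card {j. j < m \<and> x ! j \<noteq> y ! j} = N \<longrightarrow>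
          (\<forall>j\<in>dep_set g m i. x ! j = y ! j) \<longrightarrow> g x ! i = g y ! i" for N
  proof (induction N)
    case 0
    show ?case
    proof (intro allI impI)
      fix x assume x: "length x = m" "card {j. j < m \<and> x ! j \<noteq> y ! j} = 0"
      have "finite {j. j < m \<and> x ! j \<noteq> y ! j}" by simp
      hence "{j. j < m \<and> x ! j \<noteq> y ! j} = {}" using x(2) by simp
      hence "\<forall>j<m. x ! j = y ! j" by blast
      hence "x = y" using assms(2) x(1) by (simp add: list_eq_iff_nth_eq)
      thus "g x ! i = g y ! i" by simp
    qed
  next
    case (Suc N)
    show ?case
    proof (intro allI impI)
      fix x assume x: "length x = m" "card {j. j < m \<and> x ! j \<noteq> y ! j} = Suc N"
        and ag: "\<forall>j\<in>dep_set g m i. x ! j = y ! j"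
      have "{j. j < m \<and> x ! j \<noteq> y ! j} \<noteq> {}" using x(2) by (metis card.empty Zero_not_Suc)
      then obtain j where j: "j < m" "x ! j \<noteq> y ! j" by blast
      have jn: "j \<notin> dep_set g m i" using ag j by auto
      define x' where "x' = x[j := \<not> x ! j]"
      have "j \<notin> {j. j < m \<and> (\<exists>x \<in> bitstrings m. g x ! i \<noteq> g (x[j := \<not> x ! j]) ! i)}"
        using jn unfolding dep_set_def .
      hence "g x ! i = g x' ! i"
        using j(1) x(1) unfolding x'_def bitstrings_def by blast
      moreover have "g x' ! i = g y ! i"
      proof -
        have lx': "length x' = m" using x(1) by (simp add: x'_def)
        have "{j'. j' < m \<and> x' ! j' \<noteq> y ! j'} = {j. j < m \<and> x ! j \<noteq> y ! j} - {j}"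
          using j x(1) by (auto simp: x'_def nth_list_update)
        hence "card {j'. j' < m \<and> x' ! j' \<noteq> y ! j'} = N"
          using x(2) j by (simp add: card_Diff_singleton)
        moreover have "\<forall>j\<in>dep_set g m i. x' ! j = y ! j"
        proof
          fix j' assume j': "j' \<in> dep_set g m i"
          hence "j' \<noteq> j" using jn by auto
          thus "x' ! j' = y ! j'" using ag j' by (simp add: x'_def)
        qed
        ultimately show ?thesis using Suc.IH lx' by blast
      qed
      ultimately show "g x ! i = g y ! i" by simp
    qed
  qed
  thus ?thesis using assms by blast
qed

lemma tvd_ge:
  "tvd p q \<ge> \<bar>measure_pmf.prob p A - measure_pmf.prob q A\<bar>"
  unfolding tvd_def
proof (rule cSUP_upper)
  show "bdd_above (range (\<lambda>A. \<bar>measure_pmf.prob p A - measure_pmf.prob q A\<bar>))"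
  proof (rule bdd_aboveI)
    fix x assume "x \<in> range (\<lambda>A. \<bar>measure_pmf.prob p A - measure_pmf.prob q A\<bar>)"
    then obtain B where "x = \<bar>measure_pmf.prob p B - measure_pmf.prob q B\<bar>" by auto
    thus "x \<le> 1"
      using measure_pmf.prob_le_1[of p B] measure_pmf.prob_le_1[of q B]
        measure_nonneg[of p B] measure_nonneg[of q B] by linarith
  qed
qed auto

lemma tvd_min:
  assumes "finite F" "set_pmf p \<subseteq> F" "set_pmf q \<subseteq> F"
  shows "tvd p q \<ge> 1 - (\<Sum>z\<in>F. min (pmf p z) (pmf q z))"
proof -
  define B where "B = {z\<in>F. pmf p z > pmf q z}"
  have fB: "finite B" using assms(1) by (simp add: B_def)
  have "measure_pmf.prob p B - measure_pmf.prob q B = (\<Sum>z\<in>B. pmf p z - pmf q z)"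
    using fB by (simp add: measure_measure_pmf_finite sum_subtractf)
  also have "\<dots> = (\<Sum>z\<in>F. pmf p z - min (pmf p z) (pmf q z))"
    using assms(1) by (intro sum.mono_neutral_cong_left) (auto simp: B_def)
  also have "\<dots> = 1 - (\<Sum>z\<in>F. min (pmf p z) (pmf q z))"
    using sum_pmf_eq_1[OF assms(1,2)] by (simp add: sum_subtractf)
  finally show ?thesis using tvd_ge[where p=q and q=p and A=B] tvd_ge[where p=p and q=q and A=B] by linarith
qed

lemma BC_bound:
  fixes p q :: real
  assumes "0 \<le> p" "p \<le> 1" "0 \<le> q" "q \<le> 1"
  shows "sqrt (p * q) + sqrt ((1 - p) * (1 - q)) \<le> exp (- ((p - q)^2 / 2))"
proof -
  define a b c e where "a = sqrt p" "b = sqrt (1 - p)" "c = sqrt q" "e = sqrt (1 - q)"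
  have pos: "a \<ge> 0" "b \<ge> 0" "c \<ge> 0" "e \<ge> 0" using assms by (auto simp: a_b_c_e_def)
  have sq: "a^2 = p" "b^2 = 1 - p" "c^2 = q" "e^2 = 1 - q" using assms by (auto simp: a_b_c_e_def)
  have BC: "sqrt (p * q) + sqrt ((1 - p) * (1 - q)) = a * c + b * e"
    by (simp add: a_b_c_e_def real_sqrt_mult)
  have id1: "(a*c + b*e)^2 + (a*e - b*c)^2 = 1"
  proof -
    have "(a*c + b*e)^2 + (a*e - b*c)^2 = (a^2 + b^2) * (c^2 + e^2)" by algebra
    thus ?thesis using sq by simp
  qed
  have id2: "p - q = (a*e - b*c) * (a*e + b*c)"
  proof -
    have "(a*e - b*c) * (a*e + b*c) = a^2 * e^2 - b^2 * c^2" by algebra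
    also have "\<dots> = p - q" by (simp only: sq) (simp add: algebra_simps)
    finally show ?thesis by simp
  qed
  have "(a*e + b*c)^2 \<le> 1"
  proof -
    have "(a*e + b*c)^2 + (a*c - b*e)^2 = (a^2 + b^2) * (c^2 + e^2)" by algebra
    thus ?thesis using sq by (simp add: add_nonneg_nonneg) (smt (verit) zero_le_power2)
  qed
  hence "(p - q)^2 \<le> (a*e - b*c)^2"
    unfolding id2 power_mult_distrib
    by (metis mult.right_neutral mult_left_mono zero_le_power2)
  hence "(a*c + b*e)^2 \<le> 1 - (p - q)^2" using id1 by linarith
  also have "\<dots> \<le> exp (- ((p - q)^2))" using exp_ge_add_one_self[of "- ((p - q)^2)"] by linarith
  also have "\<dots> = (exp (- ((p - q)^2 / 2)))^2" by (simp add: power2_eq_square exp_add[symmetric])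
  finally have "(a*c + b*e)^2 \<le> (exp (- ((p - q)^2 / 2)))^2" .
  hence "a*c + b*e \<le> exp (- ((p - q)^2 / 2))"
    by (rule power2_le_imp_le) simp
  thus ?thesis using BC by simp
qed

lemma choose_rec: "Suc j * (n choose Suc j) = (n - j) * (n choose j)"
proof (cases n)
  case 0 then show ?thesis by simp
next
  case (Suc n')
  have "Suc j * (Suc n' choose Suc j) = Suc n' * (n' choose j)" by (rule Suc_times_binomial)
  moreover have "(Suc n' - j) * (Suc n' choose j) = Suc n' * ((Suc n' - 1) choose j)" by (rule binomial_absorb_comp)
  ultimately show ?thesis using Suc by simp
qed

lemma mode_nat:
  fixes n k :: nat
  assumes "1 \<le> k" "k < n" "j \<le> n"
  shows "(n choose j) * k^j * (n-k)^(n-j) \<le> (n choose k) * k^k * (n-k)^(n-k)"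
proof -
  define a where "a j = (n choose j) * k^j * (n-k)^(n-j)" for j
  have rec: "a (Suc j) * (Suc j * (n - k)) = a j * ((n - j) * k)" if "j < n" for j
  proof -
    have nj: "n - j = Suc (n - Suc j)" using that by simp
    have "a (Suc j) * (Suc j * (n - k)) = (Suc j * (n choose Suc j)) * k^j * k * (n-k)^(n - Suc j) * (n - k)"
      by (simp only: a_def power_Suc mult_ac)
    also have "\<dots> = (n - j) * (n choose j) * k^j * k * ((n-k)^(n - Suc j) * (n - k))"
      by (simp only: choose_rec mult.assoc)
    also have "(n-k)^(n - Suc j) * (n - k) = (n-k)^(n-j)" by (simp add: nj)
    finally show ?thesis by (simp only: a_def power_Suc mult_ac)
  qed
  have up: "a j \<le> a (Suc j)" if "j < k" for j
  proof -
    have "(Suc j) * (n - k) \<le> (n - j) * k"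
    proof -
      have "Suc j \<le> k" "n - k \<le> n - j" using that by auto
      thus ?thesis by (metis mult.commute mult_le_mono)
    qed
    hence "a j * (Suc j * (n - k)) \<le> a j * ((n - j) * k)" by simp
    hence "a j * (Suc j * (n - k)) \<le> a (Suc j) * (Suc j * (n - k))" using rec[of j] that assms by simp
    thus ?thesis using assms by simp
  qed
  have down: "a (Suc j) \<le> a j" if "k \<le> j" "j < n" for j
  proof -
    have "(n - j) * k \<le> (Suc j) * (n - k)"
    proof -
      have "(n - j) * k \<le> (n - k) * k" using that by (simp add: diff_le_mono2)
      also have "\<dots> \<le> (n - k) * Suc j" using that by (intro mult_le_mono2) simp
      finally show ?thesis by (simp add: mult.commute)
    qed
    hence "a (Suc j) * (Suc j * (n - k)) \<le> a j * (Suc j * (n - k))"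
      using rec[of j] that by (metis mult_le_mono2)
    thus ?thesis using assms by simp
  qed
  show ?thesis
  proof (cases "j \<le> k")
    case True
    have "a j \<le> a k"
      using True
    proof (induction j rule: inc_induct)
      case base show ?case by simp
    next
      case (step i) thus ?case using up[of i] by simp
    qed
    thus ?thesis by (simp add: a_def)
  next
    case False
    have kj: "k \<le> j" using False by simp
    from kj have "a j \<le> a k"
    proof (induction rule: dec_induct)
      case base show ?case by simp
    next
      case (step i) thus ?case using down[of i] assms by simp
    qed
    thus ?thesis by (simp add: a_def)
  qed
qed


lemma binom_term:
  fixes n k j :: nat
  assumes "k \<le> n" "j \<le> n" "0 < n"
  shows "pmf (binomial_pmf n (real k / real n)) j = real ((n choose j) * k^j * (n-k)^(n-j)) / real n ^ n"
proof -
  have g: "0 \<le> real k / real n" "real k / real n \<le> 1" using assms by auto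
  have "1 - real k / real n = real (n - k) / real n" using assms by (simp add: field_simps of_nat_diff)
  hence "pmf (binomial_pmf n (real k / real n)) j = (n choose j) * (real k / n)^j * (real (n-k) / n)^(n-j)"
    using g by simp
  also have "\<dots> = (n choose j) * real k ^ j * real (n-k)^(n-j) / (real n ^ j * real n ^ (n - j))"
    by (simp add: power_divide)
  also have "real n ^ j * real n ^ (n - j) = real n ^ n"
    using assms by (simp add: power_add[symmetric])
  finally show ?thesis by simp
qed

lemma binom_mode:
  fixes n k :: nat
  assumes "1 \<le> k" "k < n"
  shows "1 \<le> real (n + 1) * pmf (binomial_pmf n (real k / real n)) k"
proof -
  let ?b = "binomial_pmf n (real k / real n)"
  have g: "0 < real k / real n" "real k / real n < 1" using assms by auto
  have "1 = (\<Sum>j\<in>{..n}. pmf ?b j)"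
    using g by (intro sum_pmf_eq_1[symmetric]) auto
  also have "\<dots> \<le> (\<Sum>j\<in>{..n}. pmf ?b k)"
  proof (intro sum_mono)
    fix j assume "j \<in> {..n}"
    hence j: "j \<le> n" by simp
    have "real ((n choose j) * k^j * (n-k)^(n-j)) \<le> real ((n choose k) * k^k * (n-k)^(n-k))"
      using mode_nat[OF assms j] by (simp only: of_nat_le_iff)
    hence "real ((n choose j) * k^j * (n-k)^(n-j)) / real n ^ n \<le> real ((n choose k) * k^k * (n-k)^(n-k)) / real n ^ n"
      by (intro divide_right_mono) auto
    thus "pmf ?b j \<le> pmf ?b k"
      using binom_term[of k n j] binom_term[of k n k] assms j by simp
  qed
  also have "\<dots> = real (n + 1) * pmf ?b k" by simp
  finally show ?thesis .
qed

lemma weight_map: "hweight (map f [0..<n]) = card {x\<in>{..<n}. f x}"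
proof -
  have "hweight (map f [0..<n]) = length (filter f [0..<n])"
    by (simp add: hweight_def filter_map o_def)
  also have "\<dots> = card (set (filter f [0..<n]))"
    by (rule distinct_card[symmetric]) simp
  also have "set (filter f [0..<n]) = {x\<in>{..<n}. f x}" by auto
  finally show ?thesis .
qed

lemma finite_bitstrings: "finite (bitstrings n)"
proof -
  have "bitstrings n = {xs. set xs \<subseteq> (UNIV :: bool set) \<and> length xs = n}"
    by (auto simp: bitstrings_def)
  thus ?thesis using finite_lists_length_eq[of "UNIV :: bool set" n] by simp
qed

lemma pmf_map_le:
  assumes "\<And>y. pmf Q y \<le> C * pmf M y" "finite (set_pmf Q)" "C \<ge> 0"
  shows "pmf (map_pmf h Q) z \<le> C * pmf (map_pmf h M) z"
proof -
  let ?A = "h -` {z} \<inter> set_pmf Q"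
  have fA: "finite ?A" using assms(2) by auto
  have "pmf (map_pmf h Q) z = measure_pmf.prob Q ?A"
    by (simp add: pmf_map measure_Int_set_pmf)
  also have "\<dots> = (\<Sum>y\<in>?A. pmf Q y)" using fA by (simp add: measure_measure_pmf_finite)
  also have "\<dots> \<le> (\<Sum>y\<in>?A. C * pmf M y)" by (intro sum_mono assms(1))
  also have "\<dots> = C * measure_pmf.prob M ?A"
    using fA by (simp add: measure_measure_pmf_finite sum_distrib_left)
  also have "\<dots> \<le> C * measure_pmf.prob M (h -` {z})"
    by (intro mult_left_mono measure_pmf.finite_measure_mono assms(3)) auto
  also have "\<dots> = C * pmf (map_pmf h M) z" by (simp add: pmf_map)
  finally show ?thesis .
qed

lemma Q_bound:
  fixes n k :: nat
  assumes "1 \<le> k" "k < n"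
  defines "\<gamma> \<equiv> real k / real n"
  defines "\<mu> \<equiv> map_pmf (\<lambda>f. map f [0..<n]) (Pi_pmf {..<n} False (\<lambda>_. bernoulli_pmf \<gamma>))"
  shows "pmf (D_weight n k) y \<le> real (n + 1) * pmf \<mu> y"
proof -
  let ?B = "Pi_pmf {..<n} False (\<lambda>_. bernoulli_pmf \<gamma>)"
  let ?tl = "\<lambda>f::nat \<Rightarrow> bool. map f [0..<n]"
  define W where "W = {ys \<in> bitstrings n. hweight ys = k}"
  define c where "c = \<gamma> ^ k * (1 - \<gamma>) ^ (n - k)"
  have g: "0 < \<gamma>" "\<gamma> < 1" using assms by (auto simp: \<gamma>_def)
  have cpos: "c > 0" using g by (simp add: c_def)
  have fW: "finite W" unfolding W_def using finite_bitstrings by auto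
  have pmu: "pmf \<mu> y = c" if y: "y \<in> W" for y
  proof -
    define fy where "fy = (\<lambda>j. if j < n then y ! j else False)"
    have ly: "length y = n" "hweight y = k" using y by (auto simp: W_def bitstrings_def)
    have sub: "set_pmf ?B \<subseteq> {f. \<forall>x. x \<notin> {..<n} \<longrightarrow> f x = False}"
      by (rule set_Pi_pmf_subset) simp
    have "?tl -` {y} \<inter> set_pmf ?B = {fy} \<inter> set_pmf ?B"
    proof (intro equalityI subsetI)
      fix f assume f: "f \<in> ?tl -` {y} \<inter> set_pmf ?B"
      hence "map f [0..<n] = y" "\<forall>x. x \<notin> {..<n} \<longrightarrow> f x = False" using sub by auto
      hence "f = fy" unfolding fy_def by (auto simp: fun_eq_iff)
      thus "f \<in> {fy} \<inter> set_pmf ?B" using f by simp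
    next
      fix f assume "f \<in> {fy} \<inter> set_pmf ?B"
      moreover have "map fy [0..<n] = y" using ly by (simp add: fy_def list_eq_iff_nth_eq)
      ultimately show "f \<in> ?tl -` {y} \<inter> set_pmf ?B" by auto
    qed
    hence "pmf \<mu> y = measure_pmf.prob ?B ({fy} \<inter> set_pmf ?B)"
      unfolding \<mu>_def pmf_map by (metis measure_Int_set_pmf)
    also have "\<dots> = pmf ?B fy" by (simp add: measure_Int_set_pmf measure_pmf_single)
    also have "\<dots> = (\<Prod>j\<in>{..<n}. pmf (bernoulli_pmf \<gamma>) (fy j))"
      by (rule pmf_Pi') (auto simp: fy_def)
    also have "\<dots> = (\<Prod>j\<in>{..<n}. if y ! j then \<gamma> else 1 - \<gamma>)"
      using g by (intro prod.cong) (auto simp: fy_def)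
    also have "\<dots> = \<gamma> ^ card ({..<n} \<inter> {j. y ! j}) * (1 - \<gamma>) ^ card ({..<n} \<inter> - {j. y ! j})"
      by (simp add: prod.If_cases)
    also have "card ({..<n} \<inter> {j. y ! j}) = k"
    proof -
      have "y = map (\<lambda>j. y ! j) [0..<n]" using ly by (simp add: list_eq_iff_nth_eq)
      hence "k = card {x\<in>{..<n}. y ! x}" using ly weight_map[of "\<lambda>j. y ! j" n] by simp
      thus ?thesis by (simp add: Int_def conj_commute)
    qed
    also have "card ({..<n} \<inter> - {j. y ! j}) = n - k"
    proof -
      have "card ({..<n} \<inter> - {j. y ! j}) = card ({..<n} - ({..<n} \<inter> {j. y ! j}))"
        by (rule arg_cong[where f=card]) auto
      also have "\<dots> = n - card ({..<n} \<inter> {j. y ! j})" by (subst card_Diff_subset) auto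
      finally show ?thesis using \<open>card ({..<n} \<inter> {j. y ! j}) = k\<close> by simp
    qed
    finally show ?thesis by (simp add: c_def)
  qed
  have mW: "measure_pmf.prob \<mu> W = pmf (binomial_pmf n \<gamma>) k"
  proof -
    have "?tl -` W = {f. card {x\<in>{..<n}. f x} = k}"
      by (auto simp: W_def bitstrings_def weight_map)
    hence "measure_pmf.prob \<mu> W = measure_pmf.prob ?B {f. card {x\<in>{..<n}. f x} = k}"
      by (simp add: \<mu>_def)
    also have "\<dots> = measure_pmf.prob (map_pmf (\<lambda>f. card {x\<in>{..<n}. f x}) ?B) {k}"
      by (simp add: vimage_def)
    also have "map_pmf (\<lambda>f. card {x\<in>{..<n}. f x}) ?B = binomial_pmf n \<gamma>"
      using g by (intro binomial_pmf_altdef'[symmetric]) auto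
    finally show ?thesis by (simp add: measure_pmf_single)
  qed
  have "measure_pmf.prob \<mu> W = (\<Sum>y\<in>W. pmf \<mu> y)" using fW by (simp add: measure_measure_pmf_finite)
  also have "\<dots> = real (card W) * c" using pmu by simp
  finally have cW: "real (card W) * c = pmf (binomial_pmf n \<gamma>) k" using mW by simp
  have bm: "1 \<le> real (n + 1) * (real (card W) * c)"
    using binom_mode[OF assms(1,2)] cW by (simp add: \<gamma>_def)
  hence cardpos: "card W > 0" using cpos by (cases "card W = 0") auto
  show ?thesis
  proof (cases "y \<in> W")
    case True
    have "pmf (D_weight n k) y = 1 / real (card W)"
      using True fW cardpos unfolding D_weight_def W_def[symmetric] by (auto simp: card_gt_0_iff)
    also have "\<dots> \<le> real (n + 1) * c"
      using bm cardpos by (simp add: field_simps)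
    finally show ?thesis using pmu[OF True] by simp
  next
    case False
    hence "pmf (D_weight n k) y = 0"
      using fW cardpos unfolding D_weight_def W_def[symmetric] by (auto simp: card_gt_0_iff)
    thus ?thesis by simp
  qed
qed

lemma tvd_map_le: "tvd (map_pmf h p) (map_pmf h q) \<le> tvd p q"
  unfolding tvd_def[of "map_pmf h p"]
proof (rule cSUP_least)
  fix A
  show "\<bar>measure_pmf.prob (map_pmf h p) A - measure_pmf.prob (map_pmf h q) A\<bar> \<le> tvd p q"
    using tvd_ge[where p=p and q=q and A="h -` A"] by simp
qed auto

lemma sqrt_prod: "sqrt (prod f A) = (\<Prod>x\<in>A. sqrt (f x))"
  by (induction A rule: infinite_finite_induct) (auto simp: real_sqrt_mult)

lemma sum_PiE_dflt_prod:
  fixes w :: "'i \<Rightarrow> bool \<Rightarrow> real"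
  assumes "finite S"
  shows "(\<Sum>z\<in>PiE_dflt S False (\<lambda>_. UNIV). \<Prod>i\<in>S. w i (z i)) = (\<Prod>i\<in>S. \<Sum>b\<in>UNIV. w i b)"
proof -
  let ?e = "\<lambda>h x. if x \<in> S then h x else False"
  have inj: "inj_on ?e (PiE S (\<lambda>_. UNIV))"
  proof (rule inj_onI)
    fix f f' assume f: "f \<in> PiE S (\<lambda>_. UNIV)" "f' \<in> PiE S (\<lambda>_. UNIV)" and e: "?e f = ?e f'"
    show "f = f'"
    proof
      fix x show "f x = f' x"
        using f e by (cases "x \<in> S") (auto simp: fun_eq_iff PiE_def extensional_def dest: spec[of _ x])
    qed
  qed
  have "(\<Sum>z\<in>PiE_dflt S False (\<lambda>_. UNIV). \<Prod>i\<in>S. w i (z i))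
      = (\<Sum>z\<in>?e ` PiE S (\<lambda>_. UNIV). \<Prod>i\<in>S. w i (z i))"
    by (simp add: dflt_image_PiE)
  also have "\<dots> = (\<Sum>h\<in>PiE S (\<lambda>_. UNIV). \<Prod>i\<in>S. w i (?e h i))"
    by (subst sum.reindex[OF inj]) simp
  also have "\<dots> = (\<Sum>h\<in>PiE S (\<lambda>_. UNIV). \<Prod>i\<in>S. w i (h i))"
    by (intro sum.cong prod.cong) auto
  also have "\<dots> = (\<Prod>i\<in>S. \<Sum>b\<in>UNIV. w i b)"
    using assms by (intro prod_sum_PiE[symmetric]) auto
  finally show ?thesis .
qed

lemma unif_eq:
  "unif_bits m = map_pmf (\<lambda>f. map f [0..<m]) (Pi_pmf {..<m} False (\<lambda>_. pmf_of_set (UNIV :: bool set)))"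
proof -
  let ?X = "PiE_dflt {..<m} False (\<lambda>_. UNIV :: bool set)"
  have "Pi_pmf {..<m} False (\<lambda>_. pmf_of_set (UNIV :: bool set)) = pmf_of_set ?X"
    by (rule Pi_pmf_of_set) auto
  moreover have "map_pmf (\<lambda>f. map f [0..<m]) (pmf_of_set ?X) = pmf_of_set ((\<lambda>f. map f [0..<m]) ` ?X)"
  proof (rule map_pmf_of_set_inj)
    show "inj_on (\<lambda>f. map f [0..<m]) ?X"
    proof (rule inj_onI)
      fix f f' assume f: "f \<in> ?X" "f' \<in> ?X" and eq: "map f [0..<m] = map f' [0..<m]"
      have a: "\<forall>j<m. f j = f' j" using eq by (simp add: map_eq_conv)
      have b: "\<forall>j. \<not> j < m \<longrightarrow> f j = False \<and> f' j = False" using f by (simp add: PiE_dflt_def)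
      show "f = f'"
      proof
        fix j show "f j = f' j" using a b by (cases "j < m") auto
      qed
    qed
    show "?X \<noteq> {}" by (auto simp: PiE_dflt_def)
    show "finite ?X" by auto
  qed
  moreover have "(\<lambda>f. map f [0..<m]) ` ?X = bitstrings m"
  proof (intro equalityI subsetI)
    fix xs assume "xs \<in> (\<lambda>f. map f [0..<m]) ` ?X"
    thus "xs \<in> bitstrings m" by (auto simp: bitstrings_def)
  next
    fix xs assume xs: "xs \<in> bitstrings m"
    let ?f = "\<lambda>j. if j < m then xs ! j else False"
    have fX: "?f \<in> ?X" by (auto simp: PiE_dflt_def)
    have lx: "length xs = m" using xs by (simp add: bitstrings_def)
    have M: "map ?f [0..<m] = xs" by (rule nth_equalityI) (simp_all add: lx)
    show "xs \<in> (\<lambda>f. map f [0..<m]) ` ?X" by (rule image_eqI[where f="\<lambda>f. map f [0..<m]", OF sym[OF M] fX])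
  qed
  ultimately show ?thesis by (simp add: unif_bits_def)
qed

lemma err_nonneg: "err \<gamma> t \<ge> 0"
  unfolding err_def by (rule cINF_greatest) auto

lemma err_le:
  assumes "c \<le> d"
  shows "err \<gamma> d \<le> \<bar>\<gamma> - real a / 2 ^ c\<bar>"
proof -
  have "real a / 2 ^ c = real_of_int (int (a * 2 ^ (d - c))) / 2 ^ d"
  proof -
    have "(2::real) ^ d = 2 ^ (d - c) * 2 ^ c" using assms by (simp add: power_add[symmetric])
    thus ?thesis by simp
  qed
  hence "\<bar>\<gamma> - real a / 2 ^ c\<bar> = (\<lambda>j::int. \<bar>\<gamma> - real_of_int j / 2 ^ d\<bar>) (int (a * 2 ^ (d - c)))" by simp
  moreover have "err \<gamma> d \<le> (\<lambda>j::int. \<bar>\<gamma> - real_of_int j / 2 ^ d\<bar>) (int (a * 2 ^ (d - c)))"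
    unfolding err_def by (rule cINF_lower) (auto intro: bdd_belowI[where m=0])
  ultimately show ?thesis by simp
qed


theorem mainTheorem6:
  fixes n m k d r :: nat and g :: "bool list \<Rightarrow> bool list"
  assumes "1 \<le> k" and "k \<le> n - 1"
    and "\<forall>x \<in> bitstrings m. length (g x) = n"
    and "dr_local g m n d r"
  shows "tvd (map_pmf g (unif_bits m)) (D_weight n k)
           \<ge> 1 - 2 * sqrt (2 * real n) *
               exp (- (err (real k / real n) d ^ 2 * real r / 2))"
proof -
  have kn: "1 \<le> k" "k < n" using assms(1,2) by auto
  define \<gamma> where "\<gamma> = real k / real n"
  define \<epsilon> where "\<epsilon> = err \<gamma> d"
  have g01: "0 < \<gamma>" "\<gamma> < 1" using kn by (auto simp: \<gamma>_def)
  obtain S where S: "S \<subseteq> {..<n}" "card S = r"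
    and disj: "\<forall>i\<in>S. \<forall>i'\<in>S. i \<noteq> i' \<longrightarrow> dep_set g m i \<inter> dep_set g m i' = {}"
    using assms(4) unfolding dr_local_def by blast
  have dloc: "\<forall>i<n. card (dep_set g m i) \<le> d" using assms(4) unfolding dr_local_def d_local_def by blast
  have finS: "finite S" using S(1) finite_subset by blast
  define D where "D i = dep_set g m i" for i
  have Dsub: "D i \<subseteq> {..<m}" for i by (auto simp: D_def dep_set_def)
  define coin where "coin = pmf_of_set (UNIV :: bool set)"
  define U0 where "U0 = Pi_pmf {..<m} False (\<lambda>_. coin)"
  define \<phi> where "\<phi> i f = g (map f [0..<m]) ! i" for i and f :: "nat \<Rightarrow> bool"
  define h where "h y = (\<lambda>i. if i \<in> S then y ! i else False)" for y :: "bool list"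
  define q where "q i = map_pmf (\<phi> i) U0" for i
  define F where "F = PiE_dflt S False (\<lambda>_. UNIV :: bool set)"
  have dep: "\<forall>f f'. (\<forall>x\<in>D i. f x = f' x) \<longrightarrow> \<phi> i f = \<phi> i f'" for i
  proof (intro allI impI)
    fix f f' :: "nat \<Rightarrow> bool" assume a: "\<forall>x\<in>D i. f x = f' x"
    have H: "\<forall>j\<in>dep_set g m i. map f [0..<m] ! j = map f' [0..<m] ! j"
    proof
      fix j assume j: "j \<in> dep_set g m i"
      hence "j < m" using Dsub[of i] by (auto simp: D_def)
      thus "map f [0..<m] ! j = map f' [0..<m] ! j" using a j by (simp add: D_def)
    qed
    show "\<phi> i f = \<phi> i f'" unfolding \<phi>_def
      using dep_agree[of "map f [0..<m]" m "map f' [0..<m]" g i] H by simp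
  qed
  have P': "map_pmf h (map_pmf g (unif_bits m)) = Pi_pmf S False q"
  proof -
    have "map_pmf h (map_pmf g (unif_bits m)) = map_pmf (\<lambda>f i. if i \<in> S then \<phi> i f else False) U0"
      unfolding unif_eq U0_def coin_def pmf.map_comp
      by (rule map_pmf_cong) (auto simp: h_def \<phi>_def fun_eq_iff)
    also have "\<dots> = Pi_pmf S False (\<lambda>i. map_pmf (\<phi> i) U0)"
      unfolding U0_def
      by (rule Pi_indep[where D=D, OF finS]) (simp, use Dsub in blast, use disj in \<open>simp add: D_def\<close>, use dep in blast)
    finally show ?thesis by (simp add: q_def[abs_def])
  qed
  define \<mu> where "\<mu> = map_pmf (\<lambda>f. map f [0..<n]) (Pi_pmf {..<n} False (\<lambda>_. bernoulli_pmf \<gamma>))"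
  define \<nu> where "\<nu> = Pi_pmf S False (\<lambda>_. bernoulli_pmf \<gamma>)"
  have hmu: "map_pmf h \<mu> = \<nu>"
  proof -
    have "map_pmf h \<mu> = map_pmf (\<lambda>f x. if x \<in> S then f x else False) (Pi_pmf {..<n} False (\<lambda>_. bernoulli_pmf \<gamma>))"
      unfolding \<mu>_def pmf.map_comp
      by (rule map_pmf_cong) (use S(1) in \<open>auto simp: h_def fun_eq_iff\<close>)
    also have "\<dots> = \<nu>" unfolding \<nu>_def by (rule Pi_pmf_subset[symmetric]) (use S(1) in auto)
    finally show ?thesis .
  qed
  have Qle: "pmf (map_pmf h (D_weight n k)) z \<le> real (n + 1) * pmf \<nu> z" for z
  proof -
    have "pmf (map_pmf h (D_weight n k)) z \<le> real (n + 1) * pmf (map_pmf h \<mu>) z"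
    proof (rule pmf_map_le)
      show "pmf (D_weight n k) y \<le> real (n + 1) * pmf \<mu> y" for y
        unfolding \<mu>_def \<gamma>_def by (rule Q_bound[OF kn])
      have "set_pmf (D_weight n k) \<subseteq> bitstrings n"
      proof -
        have "{ys \<in> bitstrings n. hweight ys = k} \<noteq> {}"
        proof -
          have "replicate k True @ replicate (n - k) False \<in> {ys \<in> bitstrings n. hweight ys = k}"
            using kn by (simp add: bitstrings_def hweight_def)
          thus ?thesis by blast
        qed
        moreover have "finite {ys \<in> bitstrings n. hweight ys = k}" using finite_bitstrings by auto
        ultimately show ?thesis unfolding D_weight_def by auto
      qed
      thus "finite (set_pmf (D_weight n k))" using finite_bitstrings finite_subset by blast
    qed simp
    thus ?thesis using hmu by simp
  qed
  have finF: "finite F" unfolding F_def using finS by auto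
  have suppP: "set_pmf (Pi_pmf S False q) \<subseteq> F"
    using set_Pi_pmf_subset[OF finS, of False q] by (auto simp: F_def PiE_dflt_def)
  have suppQ: "set_pmf (map_pmf h (D_weight n k)) \<subseteq> F"
    by (auto simp: F_def PiE_dflt_def h_def)
  define p where "p i = pmf (q i) True" for i
  have p01: "0 \<le> p i" "p i \<le> 1" for i by (auto simp: p_def pmf_le_1)
  have peps: "\<epsilon> \<le> \<bar>\<gamma> - p i\<bar>" if i: "i \<in> S" for i
  proof -
    define X where "X = PiE_dflt (D i) False (\<lambda>_. UNIV :: bool set)"
    have finD: "finite (D i)" using Dsub finite_subset by blast
    have "q i = map_pmf (\<phi> i) (Pi_pmf (D i) False (\<lambda>_. coin))"
      unfolding q_def U0_def
      by (rule map_Pi_restrict[where D="D i", symmetric]) (simp, rule Dsub, simp, use dep in blast)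
    also have "Pi_pmf (D i) False (\<lambda>_. coin) = pmf_of_set X"
      unfolding coin_def X_def by (rule Pi_pmf_of_set) (use finD in auto)
    finally have qi: "q i = map_pmf (\<phi> i) (pmf_of_set X)" .
    have finX1: "finite X" unfolding X_def using finD by (intro finite_PiE_dflt) auto
    have finX2: "X \<noteq> {}" unfolding X_def by (auto simp: PiE_dflt_def)
    note finX = finX1 finX2
    have cX: "card X = 2 ^ card (D i)"
      unfolding X_def using finD by (subst card_PiE_dflt) auto
    have "p i = real (card (X \<inter> \<phi> i -` {True})) / 2 ^ card (D i)"
      unfolding p_def qi pmf_map using finX cX by (simp add: measure_pmf_of_set)
    moreover have "card (D i) \<le> d" using dloc S(1) i by (auto simp: D_def)
    ultimately show ?thesis unfolding \<epsilon>_def by (simp add: err_le)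
  qed
  have eps0: "0 \<le> \<epsilon>" unfolding \<epsilon>_def by (rule err_nonneg)
  have BCi: "(\<Sum>b\<in>UNIV. sqrt (pmf (q i) b * pmf (bernoulli_pmf \<gamma>) b)) \<le> exp (- (\<epsilon>^2 / 2))"
    if i: "i \<in> S" for i
  proof -
    have "(\<Sum>b\<in>UNIV. sqrt (pmf (q i) b * pmf (bernoulli_pmf \<gamma>) b))
        = sqrt (p i * \<gamma>) + sqrt ((1 - p i) * (1 - \<gamma>))"
      using g01 by (simp add: UNIV_bool p_def pmf_False_conv_True[of "q i"])
    also have "\<dots> \<le> exp (- ((p i - \<gamma>)^2 / 2))"
      by (rule BC_bound) (use p01 g01 in auto)
    also have "\<dots> \<le> exp (- (\<epsilon>^2 / 2))"
    proof -
      have "\<epsilon>^2 \<le> \<bar>\<gamma> - p i\<bar>^2" using peps[OF i] eps0 by (intro power_mono) auto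
      hence "\<epsilon>^2 \<le> (p i - \<gamma>)^2" by (simp add: power2_abs power2_commute)
      thus ?thesis by simp
    qed
    finally show ?thesis .
  qed
  have "1 - tvd (map_pmf g (unif_bits m)) (D_weight n k)
      \<le> 1 - tvd (Pi_pmf S False q) (map_pmf h (D_weight n k))"
    using tvd_map_le[of h "map_pmf g (unif_bits m)" "D_weight n k"] P' by simp
  also have "\<dots> \<le> (\<Sum>z\<in>F. min (pmf (Pi_pmf S False q) z) (pmf (map_pmf h (D_weight n k)) z))"
    using tvd_min[OF finF suppP suppQ] by simp
  also have "\<dots> \<le> (\<Sum>z\<in>F. sqrt (real (n + 1)) * (\<Prod>i\<in>S. sqrt (pmf (q i) (z i) * pmf (bernoulli_pmf \<gamma>) (z i))))"
  proof (rule sum_mono)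
    fix z assume z: "z \<in> F"
    have zF: "\<And>x. x \<notin> S \<Longrightarrow> z x = False" using z by (auto simp: F_def PiE_dflt_def)
    let ?a = "pmf (Pi_pmf S False q) z" and ?b = "pmf (map_pmf h (D_weight n k)) z"
    have "min ?a ?b \<le> sqrt (?a * ?b)"
      by (rule real_le_rsqrt) (auto simp: power2_eq_square min_def intro: mult_mono)
    also have "\<dots> \<le> sqrt (?a * (real (n + 1) * pmf \<nu> z))"
      by (intro real_sqrt_le_mono mult_left_mono Qle) auto
    also have "\<dots> = sqrt (real (n + 1)) * sqrt ((\<Prod>i\<in>S. pmf (q i) (z i)) * (\<Prod>i\<in>S. pmf (bernoulli_pmf \<gamma>) (z i)))"
      unfolding \<nu>_def using finS zF by (simp add: pmf_Pi' real_sqrt_mult mult_ac)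
    also have "\<dots> = sqrt (real (n + 1)) * (\<Prod>i\<in>S. sqrt (pmf (q i) (z i) * pmf (bernoulli_pmf \<gamma>) (z i)))"
      by (simp add: prod.distrib[symmetric] sqrt_prod)
    finally show "min ?a ?b \<le> \<dots>" .
  qed
  also have "\<dots> = sqrt (real (n + 1)) * (\<Prod>i\<in>S. \<Sum>b\<in>UNIV. sqrt (pmf (q i) b * pmf (bernoulli_pmf \<gamma>) b))"
    unfolding F_def sum_distrib_left[symmetric] using sum_PiE_dflt_prod[OF finS, of "\<lambda>i b. sqrt (pmf (q i) b * pmf (bernoulli_pmf \<gamma>) b)"] by simp
  also have "\<dots> \<le> sqrt (real (n + 1)) * (\<Prod>i\<in>S. exp (- (\<epsilon>^2 / 2)))"
    by (intro mult_left_mono prod_mono) (auto intro!: sum_nonneg BCi)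
  also have "(\<Prod>i\<in>S. exp (- (\<epsilon>^2 / 2))) = exp (- (\<epsilon> ^ 2 * real r / 2))"
    using S(2) by (simp add: exp_of_nat_mult[symmetric] mult_ac)
  also have "sqrt (real (n + 1)) \<le> 2 * sqrt (2 * real n)"
  proof -
    have "sqrt (real (n + 1)) \<le> sqrt (8 * real n)" using kn by (intro real_sqrt_le_mono) simp
    also have "sqrt (8 * real n) = 2 * sqrt (2 * real n)"
    proof -
      have "sqrt (8 * real n) = sqrt (2^2) * sqrt (2 * real n)"
        unfolding real_sqrt_mult[symmetric] by simp
      thus ?thesis by simp
    qed
    finally show ?thesis .
  qed
  hence "sqrt (real (n + 1)) * exp (- (\<epsilon> ^ 2 * real r / 2)) \<le> 2 * sqrt (2 * real n) * exp (- (\<epsilon> ^ 2 * real r / 2))"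
    by (intro mult_right_mono) auto
  finally show ?thesis unfolding \<epsilon>_def \<gamma>_def by linarith
qed

end
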